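(* Let $k\in\mathbb{N}$ and let $\{f_n\}$ be a sequence of functions in $\mathcal{L}^{(k)}_0$ converging to $0$ pointwise on $T$ and such that $\{\|f_n\|_k\}$ is bounded. Then $f_n\to0$ weakly in $\mathcal{L}^{(k)}_0$.
   Context: $T$ is a tree (locally finite, connected, simply connected graph, identified with its vertex set) without terminal vertices, rooted at $o$. $|v|$ is the distance from $o$ to $v$; for $v\ne o$, $v^-$ is the parent of $v$. $T^*=T\setminus\{o\}$, $Df(v)=|f(v)-f(v^-)|$. For $x\ge1$: $\ell_0(x)=1$, $\ell_1(x)=1+\ln x$, $\ell_j(x)=1+\ln\ell_{j-1}(x)$ for $j\ge2$. $\mathcal{L}^{(k)}$ is the space of $f:T\to\mathbb{C}$ with $\sup_{v\in T^*}|v|\prod_{j=0}^{k-1}\ell_j(|v|)Df(v)<\infty$, normed by $\|f\|_k=|f(o)|+\sup_{v\in T^*}|v|\prod_{j=0}^{k-1}\ell_j(|v|)Df(v)$; $\mathcal{L}^{(k)}_0$ is its subspace (with the same norm) of $f$ with $\lim_{|v|\to\infty}|v|\prod_{j=0}^{k-1}\ell_j(|v|)Df(v)=0$. *)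

theory Defs
  imports "HOL-Analysis.Analysis"
begin

text \<open>A rooted tree with vertex set UNIV (of type 'v), root rt, encoded by its parent map par:
  every vertex reaches the root by iterating par; edges are the pairs {v, par v} for v distinct from rt.
  Such a graph is connected and simply connected.\<close>

definition children :: "'v \<Rightarrow> ('v \<Rightarrow> 'v) \<Rightarrow> 'v \<Rightarrow> 'v set" where
  "children rt par v = {w. w \<noteq> rt \<and> par w = v}"

definition vdegree :: "'v \<Rightarrow> ('v \<Rightarrow> 'v) \<Rightarrow> 'v \<Rightarrow> nat" where
  "vdegree rt par v = card (children rt par v) + (if v = rt then 0 else 1)"

definition rooted_tree :: "'v \<Rightarrow> ('v \<Rightarrow> 'v) \<Rightarrow> bool" where
  "rooted_tree rt par \<longleftrightarrow>
     par rt = rt \<and>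
     (\<forall>v. \<exists>n. (par ^^ n) v = rt) \<and>
     (\<forall>v. finite (children rt par v)) \<and>
     (\<forall>v. vdegree rt par v \<ge> 2)"

definition depth :: "'v \<Rightarrow> ('v \<Rightarrow> 'v) \<Rightarrow> 'v \<Rightarrow> nat" where
  "depth rt par v = (LEAST n. (par ^^ n) v = rt)"

fun ell :: "nat \<Rightarrow> real \<Rightarrow> real" where
  "ell 0 x = 1"
| "ell (Suc 0) x = 1 + ln x"
| "ell (Suc (Suc j)) x = 1 + ln (ell (Suc j) x)"

definition weight :: "nat \<Rightarrow> nat \<Rightarrow> real" where
  "weight k m = real m * (\<Prod>j<k. ell j (real m))"

definition Dif :: "('v \<Rightarrow> 'v) \<Rightarrow> ('v \<Rightarrow> complex) \<Rightarrow> 'v \<Rightarrow> real" where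
  "Dif par f v = cmod (f v - f (par v))"

definition wDif :: "nat \<Rightarrow> 'v \<Rightarrow> ('v \<Rightarrow> 'v) \<Rightarrow> ('v \<Rightarrow> complex) \<Rightarrow> 'v \<Rightarrow> real" where
  "wDif k rt par f v = weight k (depth rt par v) * Dif par f v"

definition Lk :: "nat \<Rightarrow> 'v \<Rightarrow> ('v \<Rightarrow> 'v) \<Rightarrow> ('v \<Rightarrow> complex) set" where
  "Lk k rt par = {f. bdd_above (wDif k rt par f ` {v. v \<noteq> rt})}"

definition normk :: "nat \<Rightarrow> 'v \<Rightarrow> ('v \<Rightarrow> 'v) \<Rightarrow> ('v \<Rightarrow> complex) \<Rightarrow> real" where
  "normk k rt par f = cmod (f rt) + (SUP v\<in>{v. v \<noteq> rt}. wDif k rt par f v)"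

definition Lk0 :: "nat \<Rightarrow> 'v \<Rightarrow> ('v \<Rightarrow> 'v) \<Rightarrow> ('v \<Rightarrow> complex) set" where
  "Lk0 k rt par = {f \<in> Lk k rt par.
     \<forall>\<epsilon>>0. \<exists>N. \<forall>v. v \<noteq> rt \<and> depth rt par v \<ge> N \<longrightarrow> wDif k rt par f v < \<epsilon>}"

definition bounded_functional_Lk0 ::
  "nat \<Rightarrow> 'v \<Rightarrow> ('v \<Rightarrow> 'v) \<Rightarrow> (('v \<Rightarrow> complex) \<Rightarrow> complex) \<Rightarrow> bool" where
  "bounded_functional_Lk0 k rt par \<phi> \<longleftrightarrow>
     (\<forall>f\<in>Lk0 k rt par. \<forall>g\<in>Lk0 k rt par. \<phi> (\<lambda>v. f v + g v) = \<phi> f + \<phi> g) \<and>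
     (\<forall>f\<in>Lk0 k rt par. \<forall>c. \<phi> (\<lambda>v. c * f v) = c * \<phi> f) \<and>
     (\<exists>C. \<forall>f\<in>Lk0 k rt par. cmod (\<phi> f) \<le> C * normk k rt par f)"

definition weakly_converges_Lk0 ::
  "nat \<Rightarrow> 'v \<Rightarrow> ('v \<Rightarrow> 'v) \<Rightarrow> (nat \<Rightarrow> 'v \<Rightarrow> complex) \<Rightarrow> ('v \<Rightarrow> complex) \<Rightarrow> bool" where
  "weakly_converges_Lk0 k rt par F g \<longleftrightarrow>
     (\<forall>\<phi>. bounded_functional_Lk0 k rt par \<phi> \<longrightarrow> (\<lambda>n. \<phi> (F n)) \<longlonglongrightarrow> \<phi> g)"

end

theory Submission
  imports Defs
begin


lemma depth_ex:
  assumes "rooted_tree rt par" shows "(par ^^ depth rt par v) v = rt"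
proof -
  from assms obtain n where "(par ^^ n) v = rt" unfolding rooted_tree_def by blast
  then show ?thesis unfolding depth_def by (rule LeastI)
qed

lemma depth_le:
  assumes "(par ^^ n) v = rt" shows "depth rt par v \<le> n"
  unfolding depth_def using assms by (rule Least_le)

lemma depth_rt: "depth rt par rt = 0"
  using depth_le[where n=0 and v=rt and rt=rt and par=par] by simp

lemma depth_zero:
  assumes "rooted_tree rt par" "depth rt par v = 0" shows "v = rt"
  using depth_ex[OF assms(1), of v] assms(2) by simp

lemma depth_par:
  assumes "rooted_tree rt par" "v \<noteq> rt"
  shows "depth rt par v = Suc (depth rt par (par v))"
proof -
  define n where "n = depth rt par v"
  have n: "(par ^^ n) v = rt" using depth_ex[OF assms(1)] n_def by simp
  have "n \<noteq> 0" using n assms(2) by (cases n) auto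
  then obtain m where m: "n = Suc m" by (cases n) auto
  have "(par ^^ m) (par v) = rt" using n m by (simp add: funpow_Suc_right del: funpow.simps)
  hence a: "depth rt par (par v) \<le> m" by (rule depth_le)
  have "(par ^^ Suc (depth rt par (par v))) v = rt"
    using depth_ex[OF assms(1), of "par v"] by (simp add: funpow_Suc_right del: funpow.simps)
  hence "n \<le> Suc (depth rt par (par v))" unfolding n_def by (rule depth_le)
  with a m n_def show ?thesis by simp
qed

lemma finite_depth:
  assumes "rooted_tree rt par" shows "finite {v. depth rt par v \<le> N}"
proof (induction N)
  case 0
  have "{v. depth rt par v \<le> 0} \<subseteq> {rt}" using depth_zero[OF assms] by auto
  then show ?case using finite_subset by blast
next
  case (Suc N)
  have "{v. depth rt par v \<le> Suc N} \<subseteq> {v. depth rt par v \<le> N} \<union>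
        (\<Union>u\<in>{v. depth rt par v \<le> N}. children rt par u)"
  proof
    fix v assume "v \<in> {v. depth rt par v \<le> Suc N}"
    hence v: "depth rt par v \<le> Suc N" by simp
    show "v \<in> {v. depth rt par v \<le> N} \<union> (\<Union>u\<in>{v. depth rt par v \<le> N}. children rt par u)"
    proof (cases "v = rt")
      case True then show ?thesis using depth_rt[of rt par] by simp
    next
      case False
      then have "depth rt par v = Suc (depth rt par (par v))" using depth_par[OF assms] by blast
      moreover have "v \<in> children rt par (par v)" using False by (simp add: children_def)
      ultimately show ?thesis using v by auto
    qed
  qed
  moreover have "finite (\<Union>u\<in>{v. depth rt par v \<le> N}. children rt par u)"
    using Suc assms unfolding rooted_tree_def by blast
  ultimately show ?case using Suc finite_subset by blast
qed

lemma ell_ge1: "x \<ge> 1 \<Longrightarrow> ell j x \<ge> 1"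
proof (induction j x rule: ell.induct)
  case (1 x) then show ?case by simp
next
  case (2 x) then show ?case by simp
next
  case (3 j x) then show ?case by simp
qed

lemma weight_nonneg: "weight k m \<ge> 0"
proof (cases "m = 0")
  case True then show ?thesis by (simp add: weight_def)
next
  case False
  hence "real m \<ge> 1" by simp
  hence "\<forall>j. ell j (real m) \<ge> 0" using ell_ge1 by (meson order.trans zero_le_one)
  then show ?thesis unfolding weight_def by (simp add: prod_nonneg)
qed

lemma wDif_nonneg: "wDif k rt par f v \<ge> 0"
  unfolding wDif_def Dif_def using weight_nonneg by simp

definition anc :: "'v \<Rightarrow> ('v \<Rightarrow> 'v) \<Rightarrow> nat \<Rightarrow> 'v \<Rightarrow> 'v" where
  "anc rt par N v = (par ^^ (depth rt par v - N)) v"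

lemma anc_low: "depth rt par v \<le> N \<Longrightarrow> anc rt par N v = v"
  unfolding anc_def by simp

lemma anc_rt: "anc rt par N rt = rt"
  unfolding anc_def by (simp add: depth_rt)

lemma anc_high:
  assumes "rooted_tree rt par" "v \<noteq> rt" "depth rt par v > N"
  shows "anc rt par N v = anc rt par N (par v)"
proof -
  have d: "depth rt par v = Suc (depth rt par (par v))" using depth_par[OF assms(1,2)] .
  hence "depth rt par v - N = Suc (depth rt par (par v) - N)" using assms(3) by simp
  then show ?thesis unfolding anc_def by (simp add: funpow_Suc_right del: funpow.simps)
qed

lemma Dif_anc:
  assumes "rooted_tree rt par" "v \<noteq> rt"
  shows "Dif par (\<lambda>x. g (anc rt par N x)) v = (if depth rt par v \<le> N then Dif par g v else 0)"
proof (cases "depth rt par v \<le> N")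
  case True
  moreover have "depth rt par (par v) \<le> N" using True depth_par[OF assms] by simp
  ultimately show ?thesis by (simp add: Dif_def anc_low)
next
  case False
  then show ?thesis using anc_high[OF assms] by (simp add: Dif_def)
qed

lemma Dif_comb1:
  assumes "Dif par b v = 0"
  shows "Dif par (\<lambda>x. a x + c * b x) v = Dif par a v"
proof -
  have "b v = b (par v)" using assms by (simp add: Dif_def)
  then show ?thesis by (simp add: Dif_def)
qed

lemma Dif_comb2:
  assumes "Dif par a v = 0"
  shows "Dif par (\<lambda>x. a x + c * b x) v = cmod c * Dif par b v"
proof -
  have "a v = a (par v)" using assms by (simp add: Dif_def)
  then have "Dif par (\<lambda>x. a x + c * b x) v = cmod (c * (b v - b (par v)))"
    by (simp add: Dif_def algebra_simps)
  then show ?thesis by (simp add: Dif_def norm_mult)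
qed



lemma exists_nonroot:
  assumes "rooted_tree rt par" shows "\<exists>w. w \<noteq> rt"
proof -
  have "vdegree rt par rt \<ge> 2" using assms unfolding rooted_tree_def by blast
  hence "card (children rt par rt) \<ge> 2" by (simp add: vdegree_def)
  hence "children rt par rt \<noteq> {}" by auto
  then show ?thesis by (auto simp: children_def)
qed

lemma normk_le:
  assumes "rooted_tree rt par" "\<forall>v. v \<noteq> rt \<longrightarrow> wDif k rt par f v \<le> B"
  shows "normk k rt par f \<le> cmod (f rt) + B"
proof -
  have ne: "{v. v \<noteq> rt} \<noteq> {}" using exists_nonroot[OF assms(1)] by auto
  have "(SUP v\<in>{v. v \<noteq> rt}. wDif k rt par f v) \<le> B"
    using assms(2) ne by (intro cSUP_least) auto
  then show ?thesis unfolding normk_def by simp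
qed

lemma wDif_le_normk:
  assumes "f \<in> Lk k rt par" "v \<noteq> rt"
  shows "wDif k rt par f v \<le> normk k rt par f - cmod (f rt)"
proof -
  have "wDif k rt par f v \<le> (SUP v\<in>{v. v \<noteq> rt}. wDif k rt par f v)"
    using assms unfolding Lk_def by (intro cSUP_upper) auto
  then show ?thesis unfolding normk_def by simp
qed

lemma normk_nonneg:
  assumes "rooted_tree rt par" "f \<in> Lk k rt par"
  shows "normk k rt par f \<ge> 0"
proof -
  obtain w where "w \<noteq> rt" using exists_nonroot[OF assms(1)] by blast
  from wDif_le_normk[OF assms(2) this] wDif_nonneg[of k rt par f w] norm_ge_zero[of "f rt"]
  show ?thesis by linarith
qed

lemma Lk0_crit:
  assumes f1: "f1 \<in> Lk0 k rt par" and f2: "f2 \<in> Lk0 k rt par" and ab: "a \<ge> 0" "b \<ge> 0"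
    and le: "\<forall>v. v \<noteq> rt \<longrightarrow> wDif k rt par g v \<le> a * wDif k rt par f1 v + b * wDif k rt par f2 v"
  shows "g \<in> Lk0 k rt par"
proof -
  obtain B1 where B1: "\<forall>v. v \<noteq> rt \<longrightarrow> wDif k rt par f1 v \<le> B1"
    using f1 unfolding Lk0_def Lk_def bdd_above_def by blast
  obtain B2 where B2: "\<forall>v. v \<noteq> rt \<longrightarrow> wDif k rt par f2 v \<le> B2"
    using f2 unfolding Lk0_def Lk_def bdd_above_def by blast
  have "\<forall>v. v \<noteq> rt \<longrightarrow> wDif k rt par g v \<le> a * B1 + b * B2"
  proof (intro allI impI)
    fix v assume v: "v \<noteq> rt"
    have "a * wDif k rt par f1 v \<le> a * B1" using B1 v ab by (simp add: mult_left_mono)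
    moreover have "b * wDif k rt par f2 v \<le> b * B2" using B2 v ab by (simp add: mult_left_mono)
    ultimately show "wDif k rt par g v \<le> a * B1 + b * B2" using le v by fastforce
  qed
  hence bdd: "g \<in> Lk k rt par" unfolding Lk_def bdd_above_def by blast
  have "\<exists>N. \<forall>v. v \<noteq> rt \<and> depth rt par v \<ge> N \<longrightarrow> wDif k rt par g v < e" if e: "e > 0" for e
  proof -
    define e' where "e' = e / (a + b + 1)"
    have e': "e' > 0" using e ab by (simp add: e'_def)
    obtain N1 where N1: "\<forall>v. v \<noteq> rt \<and> depth rt par v \<ge> N1 \<longrightarrow> wDif k rt par f1 v < e'"
      using f1 e' unfolding Lk0_def by blast
    obtain N2 where N2: "\<forall>v. v \<noteq> rt \<and> depth rt par v \<ge> N2 \<longrightarrow> wDif k rt par f2 v < e'"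
      using f2 e' unfolding Lk0_def by blast
    have "(a + b) * e' < e"
    proof -
      have "(a + b) * e' < (a + b + 1) * e'" using e' by simp
      also have "\<dots> = e" using ab by (simp add: e'_def)
      finally show ?thesis .
    qed
    have "\<forall>v. v \<noteq> rt \<and> depth rt par v \<ge> max N1 N2 \<longrightarrow> wDif k rt par g v < e"
    proof (intro allI impI)
      fix v assume v: "v \<noteq> rt \<and> depth rt par v \<ge> max N1 N2"
      have "a * wDif k rt par f1 v \<le> a * e'" using N1 v ab by (simp add: mult_left_mono less_imp_le)
      moreover have "b * wDif k rt par f2 v \<le> b * e'" using N2 v ab by (simp add: mult_left_mono less_imp_le)
      ultimately have "wDif k rt par g v \<le> (a + b) * e'" using le v by (fastforce simp: distrib_right)
      with \<open>(a + b) * e' < e\<close> show "wDif k rt par g v < e" by linarith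
    qed
    then show ?thesis by blast
  qed
  with bdd show ?thesis unfolding Lk0_def by blast
qed

lemma wDif_comb1:
  "Dif par b v = 0 \<Longrightarrow> wDif k rt par (\<lambda>x. a x + c * b x) v = wDif k rt par a v"
  unfolding wDif_def by (simp add: Dif_comb1)

lemma wDif_comb2:
  "Dif par a v = 0 \<Longrightarrow> wDif k rt par (\<lambda>x. a x + c * b x) v = cmod c * wDif k rt par b v"
  unfolding wDif_def by (simp add: Dif_comb2)

lemma wDif_anc:
  assumes "rooted_tree rt par" "v \<noteq> rt"
  shows "wDif k rt par (\<lambda>x. g (anc rt par N x)) v = (if depth rt par v \<le> N then wDif k rt par g v else 0)"
  unfolding wDif_def using Dif_anc[OF assms] by simp

lemma wDif_add_le:
  "wDif k rt par (\<lambda>x. a x + c * b x) v \<le> wDif k rt par a v + cmod c * wDif k rt par b v"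
proof -
  have "cmod ((a v + c * b v) - (a (par v) + c * b (par v))) \<le> cmod (a v - a (par v)) + cmod (c * (b v - b (par v)))"
    by (metis (no_types, lifting) add_diff_add norm_triangle_ineq right_diff_distrib)
  hence "Dif par (\<lambda>x. a x + c * b x) v \<le> Dif par a v + cmod c * Dif par b v"
    by (simp add: Dif_def norm_mult)
  then show ?thesis unfolding wDif_def using weight_nonneg[of k "depth rt par v"]
    by (metis distrib_left mult.left_commute mult_left_mono)
qed

lemma Lk0_comb:
  assumes "a \<in> Lk0 k rt par" "b \<in> Lk0 k rt par"
  shows "(\<lambda>x. a x + c * b x) \<in> Lk0 k rt par"
  by (rule Lk0_crit[OF assms(1,2), of 1 "cmod c"]) (use wDif_add_le in auto)

lemma Lk0_anc:
  assumes "rooted_tree rt par" "g \<in> Lk0 k rt par"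
  shows "(\<lambda>x. g (anc rt par N x)) \<in> Lk0 k rt par"
  by (rule Lk0_crit[OF assms(2,2), of 1 0]) (use wDif_anc[OF assms(1)] wDif_nonneg in auto)



lemma zero_Lk0: "(\<lambda>x. 0) \<in> Lk0 k rt par"
  unfolding Lk0_def Lk_def wDif_def Dif_def by auto

lemma phi_add:
  assumes "bounded_functional_Lk0 k rt par \<phi>" "a \<in> Lk0 k rt par" "b \<in> Lk0 k rt par"
  shows "\<phi> (\<lambda>x. a x + b x) = \<phi> a + \<phi> b"
proof -
  have add: "\<And>f g. f \<in> Lk0 k rt par \<Longrightarrow> g \<in> Lk0 k rt par \<Longrightarrow> \<phi> (\<lambda>v. f v + g v) = \<phi> f + \<phi> g"
    using assms(1) unfolding bounded_functional_Lk0_def by blast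
  show ?thesis by (rule add[OF assms(2,3)])
qed

lemma phi_scal:
  assumes "bounded_functional_Lk0 k rt par \<phi>" "b \<in> Lk0 k rt par"
  shows "\<phi> (\<lambda>x. c * b x) = c * \<phi> b"
proof -
  have sc: "\<And>f c. f \<in> Lk0 k rt par \<Longrightarrow> \<phi> (\<lambda>v. c * f v) = c * \<phi> f"
    using assms(1) unfolding bounded_functional_Lk0_def by blast
  show ?thesis by (rule sc[OF assms(2)])
qed

lemma phi_comb:
  assumes "bounded_functional_Lk0 k rt par \<phi>" "a \<in> Lk0 k rt par" "b \<in> Lk0 k rt par"
  shows "\<phi> (\<lambda>x. a x + c * b x) = \<phi> a + c * \<phi> b"
proof -
  have cb: "(\<lambda>x. c * b x) \<in> Lk0 k rt par" using Lk0_comb[OF zero_Lk0 assms(3), of c] by simp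
  show ?thesis using phi_add[OF assms(1,2) cb] phi_scal[OF assms(1,3), of c] by simp
qed

lemma phi_zero:
  assumes "bounded_functional_Lk0 k rt par \<phi>"
  shows "\<phi> (\<lambda>x. 0) = 0"
  using phi_scal[OF assms zero_Lk0, of 0] by simp

lemma phi_bound:
  assumes "rooted_tree rt par" "bounded_functional_Lk0 k rt par \<phi>"
  obtains C where "C \<ge> 0" "\<forall>f\<in>Lk0 k rt par. cmod (\<phi> f) \<le> C * normk k rt par f"
proof -
  obtain C where C: "\<forall>f\<in>Lk0 k rt par. cmod (\<phi> f) \<le> C * normk k rt par f"
    using assms(2) unfolding bounded_functional_Lk0_def by blast
  have "\<forall>f\<in>Lk0 k rt par. cmod (\<phi> f) \<le> \<bar>C\<bar> * normk k rt par f"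
  proof
    fix f assume f: "f \<in> Lk0 k rt par"
    have "normk k rt par f \<ge> 0" using normk_nonneg[OF assms(1)] f unfolding Lk0_def by blast
    hence "C * normk k rt par f \<le> \<bar>C\<bar> * normk k rt par f" by (simp add: mult_right_mono)
    with C f show "cmod (\<phi> f) \<le> \<bar>C\<bar> * normk k rt par f" by fastforce
  qed
  then show ?thesis by (rule that[rotated]) simp
qed

lemma Lk0_Lk: "f \<in> Lk0 k rt par \<Longrightarrow> f \<in> Lk k rt par"
  unfolding Lk0_def by blast

lemma tail_lemma:
  assumes rt: "rooted_tree rt par" and bf: "bounded_functional_Lk0 k rt par \<phi>" and e: "e > 0"
  shows "\<exists>N. \<forall>g\<in>Lk0 k rt par. g rt = 0 \<longrightarrow> (\<forall>v. v \<noteq> rt \<and> depth rt par v \<le> N \<longrightarrow> Dif par g v = 0)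
     \<longrightarrow> (\<forall>v. v \<noteq> rt \<longrightarrow> wDif k rt par g v \<le> 1) \<longrightarrow> cmod (\<phi> g) \<le> e"
proof (rule ccontr)
  assume "\<not> ?thesis"
  hence H: "\<forall>N. \<exists>g\<in>Lk0 k rt par. g rt = 0 \<and> (\<forall>v. v \<noteq> rt \<and> depth rt par v \<le> N \<longrightarrow> Dif par g v = 0)
     \<and> (\<forall>v. v \<noteq> rt \<longrightarrow> wDif k rt par g v \<le> 1) \<and> cmod (\<phi> g) > e" by (auto simp: not_le)
  obtain C where C0: "C \<ge> 0" and C: "\<forall>f\<in>Lk0 k rt par. cmod (\<phi> f) \<le> C * normk k rt par f"
    using phi_bound[OF rt bf] by blast
  have claim: "\<forall>N. \<exists>h N2. h \<in> Lk0 k rt par \<and> h rt = 0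
     \<and> (\<forall>v. v \<noteq> rt \<and> depth rt par v \<le> N \<longrightarrow> Dif par h v = 0)
     \<and> (\<forall>v. v \<noteq> rt \<and> depth rt par v > N2 \<longrightarrow> Dif par h v = 0)
     \<and> (\<forall>v. v \<noteq> rt \<longrightarrow> wDif k rt par h v \<le> 1) \<and> Re (\<phi> h) \<ge> real m * e / 2" for m
  proof (induction m)
    case 0
    show ?case
      by (intro allI exI[of _ "\<lambda>x. 0"] exI[of _ 0])
        (simp add: zero_Lk0 phi_zero[OF bf] Dif_def wDif_def)
  next
    case (Suc m)
    show ?case
    proof
      fix N
      obtain h N2 where h: "h \<in> Lk0 k rt par" "h rt = 0"
        "\<forall>v. v \<noteq> rt \<and> depth rt par v \<le> N \<longrightarrow> Dif par h v = 0"
        "\<forall>v. v \<noteq> rt \<and> depth rt par v > N2 \<longrightarrow> Dif par h v = 0"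
        "\<forall>v. v \<noteq> rt \<longrightarrow> wDif k rt par h v \<le> 1" "Re (\<phi> h) \<ge> real m * e / 2"
        using Suc.IH by blast
      define N2' where "N2' = max N N2"
      obtain g where g: "g \<in> Lk0 k rt par" "g rt = 0"
        "\<forall>v. v \<noteq> rt \<and> depth rt par v \<le> N2' \<longrightarrow> Dif par g v = 0"
        "\<forall>v. v \<noteq> rt \<longrightarrow> wDif k rt par g v \<le> 1" "cmod (\<phi> g) > e"
        using H by blast
      define \<delta> where "\<delta> = e / (2 * (C + 1))"
      have \<delta>: "\<delta> > 0" using e C0 by (simp add: \<delta>_def)
      obtain N3 where N3: "\<forall>v. v \<noteq> rt \<and> depth rt par v \<ge> N3 \<longrightarrow> wDif k rt par g v < \<delta>"
        using g(1) \<delta> unfolding Lk0_def by blast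
      define N3' where "N3' = max N3 N2'"
      define g' where "g' = (\<lambda>x. g (anc rt par N3' x))"
      have g'L: "g' \<in> Lk0 k rt par" unfolding g'_def by (rule Lk0_anc[OF rt g(1)])
      define t where "t = (\<lambda>x. g x + (-1) * g' x)"
      have tL: "t \<in> Lk0 k rt par" unfolding t_def by (rule Lk0_comb[OF g(1) g'L])
      have phit: "\<phi> t = \<phi> g - \<phi> g'" unfolding t_def using phi_comb[OF bf g(1) g'L, of "-1"] by simp
      have g'rt: "g' rt = 0" using g(2) by (simp add: g'_def anc_rt)
      have trt: "t rt = 0" using g(2) g'rt by (simp add: t_def)
      have wg': "wDif k rt par g' v = (if depth rt par v \<le> N3' then wDif k rt par g v else 0)"
        if "v \<noteq> rt" for v unfolding g'_def using wDif_anc[OF rt that] .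
      have Dg': "Dif par g' v = (if depth rt par v \<le> N3' then Dif par g v else 0)"
        if "v \<noteq> rt" for v unfolding g'_def using Dif_anc[OF rt that] .
      have "\<forall>v. v \<noteq> rt \<longrightarrow> wDif k rt par t v \<le> \<delta>"
      proof (intro allI impI)
        fix v assume v: "v \<noteq> rt"
        show "wDif k rt par t v \<le> \<delta>"
        proof (cases "depth rt par v \<le> N3'")
          case True
          have "depth rt par (par v) \<le> N3'" using True depth_par[OF rt v] by simp
          hence "g' (par v) = g (par v)" "g' v = g v" using True by (simp_all add: g'_def anc_low)
          hence "Dif par t v = 0" unfolding t_def Dif_def by (simp add: algebra_simps)
          then show ?thesis using \<delta> by (simp add: wDif_def)
        next
          case False
          hence "Dif par g' v = 0" using Dg' v by simp
          hence "wDif k rt par t v = wDif k rt par g v" unfolding t_def by (rule wDif_comb1)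
          moreover have "wDif k rt par g v < \<delta>" using N3 v False by (simp add: N3'_def)
          ultimately show ?thesis by simp
        qed
      qed
      hence "normk k rt par t \<le> cmod (t rt) + \<delta>" by (rule normk_le[OF rt])
      hence "normk k rt par t \<le> \<delta>" using trt by simp
      hence "C * normk k rt par t \<le> C * \<delta>" using C0 by (simp add: mult_left_mono)
      also have "C * \<delta> < e / 2"
      proof -
        have "C * \<delta> = e / 2 * (C / (C + 1))" using C0 by (simp add: \<delta>_def field_simps)
        also have "\<dots> < e / 2 * 1" using C0 e by (intro mult_strict_left_mono) auto
        finally show ?thesis by simp
      qed
      finally have "C * normk k rt par t < e / 2" .
      moreover have "cmod (\<phi> t) \<le> C * normk k rt par t" using C tL by blast
      ultimately have "cmod (\<phi> t) < e / 2" by linarith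
      hence "cmod (\<phi> g - \<phi> g') < e / 2" using phit by simp
      hence phig': "cmod (\<phi> g') > e / 2" using g(5) norm_triangle_ineq2[of "\<phi> g" "\<phi> g'"] by linarith
      hence nz: "\<phi> g' \<noteq> 0" using e by auto
      define c where "c = cnj (\<phi> g') / complex_of_real (cmod (\<phi> g'))"
      have cm: "cmod c = 1" using nz by (simp add: c_def norm_divide)
      have cphi: "c * \<phi> g' = complex_of_real (cmod (\<phi> g'))"
      proof -
        have sq: "cnj (\<phi> g') * \<phi> g' = (complex_of_real (cmod (\<phi> g')))\<^sup>2"
          using complex_norm_square[of "\<phi> g'"] by (simp add: mult.commute)
        have "c * \<phi> g' = (complex_of_real (cmod (\<phi> g')))\<^sup>2 / complex_of_real (cmod (\<phi> g'))"
          unfolding c_def using sq by simp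
        also have "\<dots> = complex_of_real (cmod (\<phi> g'))" using nz by (simp add: power2_eq_square)
        finally show ?thesis .
      qed
      define h' where "h' = (\<lambda>x. h x + c * g' x)"
      have h'L: "h' \<in> Lk0 k rt par" unfolding h'_def by (rule Lk0_comb[OF h(1) g'L])
      have phih': "\<phi> h' = \<phi> h + complex_of_real (cmod (\<phi> g'))"
        unfolding h'_def using phi_comb[OF bf h(1) g'L] cphi by simp
      have "Re (\<phi> h') \<ge> real (Suc m) * e / 2"
        proof -
        have "Re (\<phi> h') = Re (\<phi> h) + cmod (\<phi> g')" using phih' by simp
        moreover have "real (Suc m) * e / 2 = real m * e / 2 + e / 2" by (simp add: field_simps)
        ultimately show ?thesis using h(6) phig' by linarith
      qed
      moreover have "h' rt = 0" using h(2) g'rt by (simp add: h'_def)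
      moreover have "\<forall>v. v \<noteq> rt \<and> depth rt par v \<le> N \<longrightarrow> Dif par h' v = 0"
      proof (intro allI impI)
        fix v assume v: "v \<noteq> rt \<and> depth rt par v \<le> N"
        have "depth rt par v \<le> N2'" using v unfolding N2'_def by (metis le_max_iff_disj)
        hence "Dif par g v = 0" using g(3) v by blast
        hence "Dif par g' v = 0" using Dg' v by simp
        hence "Dif par h' v = Dif par h v" unfolding h'_def by (rule Dif_comb1)
        then show "Dif par h' v = 0" using h(3) v by simp
      qed
      moreover have "\<forall>v. v \<noteq> rt \<and> depth rt par v > N3' \<longrightarrow> Dif par h' v = 0"
      proof (intro allI impI)
        fix v assume v: "v \<noteq> rt \<and> depth rt par v > N3'"
        have "Dif par g' v = 0" using Dg' v by simp
        hence "Dif par h' v = Dif par h v" unfolding h'_def by (rule Dif_comb1)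
        then show "Dif par h' v = 0" using h(4) v by (simp add: N3'_def N2'_def)
      qed
      moreover have "\<forall>v. v \<noteq> rt \<longrightarrow> wDif k rt par h' v \<le> 1"
      proof (intro allI impI)
        fix v assume v: "v \<noteq> rt"
        show "wDif k rt par h' v \<le> 1"
        proof (cases "depth rt par v \<le> N2'")
          case True
          have "Dif par g' v = 0" using Dg' g(3) v True by (simp add: N3'_def)
          hence "wDif k rt par h' v = wDif k rt par h v" unfolding h'_def by (rule wDif_comb1)
          then show ?thesis using h(5) v by simp
        next
          case False
          have "Dif par h v = 0" using h(4) v False by (simp add: N2'_def)
          hence "wDif k rt par h' v = cmod c * wDif k rt par g' v" unfolding h'_def by (rule wDif_comb2)
          also have "\<dots> \<le> 1" using cm wg' v g(4) by simp
          finally show ?thesis .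
        qed
      qed
      ultimately show "\<exists>h N2. h \<in> Lk0 k rt par \<and> h rt = 0
         \<and> (\<forall>v. v \<noteq> rt \<and> depth rt par v \<le> N \<longrightarrow> Dif par h v = 0)
         \<and> (\<forall>v. v \<noteq> rt \<and> depth rt par v > N2 \<longrightarrow> Dif par h v = 0)
         \<and> (\<forall>v. v \<noteq> rt \<longrightarrow> wDif k rt par h v \<le> 1) \<and> Re (\<phi> h) \<ge> real (Suc m) * e / 2"
        using h'L by blast
    qed
  qed
  obtain m :: nat where m: "real m > 2 * C / e" using reals_Archimedean2 by blast
  obtain h N2 where h: "h \<in> Lk0 k rt par" "h rt = 0"
     "\<forall>v. v \<noteq> rt \<longrightarrow> wDif k rt par h v \<le> 1" "Re (\<phi> h) \<ge> real m * e / 2"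
    using claim[of m] by blast
  have "normk k rt par h \<le> 1" using normk_le[OF rt, of k h 1] h(2,3) by simp
  hence "C * normk k rt par h \<le> C" using C0 by (simp add: mult_left_le)
  moreover have "real m * e / 2 > C" using m e by (simp add: field_simps)
  moreover have "cmod (\<phi> h) \<ge> Re (\<phi> h)" by (rule complex_Re_le_cmod)
  moreover have "cmod (\<phi> h) \<le> C * normk k rt par h" using C h(1) by blast
  ultimately show False using h(4) by linarith
qed



lemma Dif_scal: "Dif par (\<lambda>x. c * t x) v = cmod c * Dif par t v"
  unfolding Dif_def by (simp add: norm_mult flip: right_diff_distrib)

lemma wDif_scal: "wDif k rt par (\<lambda>x. c * t x) v = cmod c * wDif k rt par t v"
  unfolding wDif_def by (simp add: Dif_scal)

theorem proposition2p11:
  fixes rt :: 'v and par :: "'v \<Rightarrow> 'v" and k :: nat and F :: "nat \<Rightarrow> 'v \<Rightarrow> complex"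
  assumes "rooted_tree rt par"
    and "\<forall>n. F n \<in> Lk0 k rt par"
    and "\<forall>v. (\<lambda>n. F n v) \<longlonglongrightarrow> 0"
    and "\<exists>M. \<forall>n. normk k rt par (F n) \<le> M"
  shows "weakly_converges_Lk0 k rt par F (\<lambda>v. 0)"
  unfolding weakly_converges_Lk0_def
proof (intro allI impI)
  fix \<phi> assume bf: "bounded_functional_Lk0 k rt par \<phi>"
  note rt = assms(1)
  obtain M where M: "\<forall>n. normk k rt par (F n) \<le> M" using assms(4) by blast
  define M0 where "M0 = max M 0 + 1"
  have M0: "M0 > 0" "M0 \<ge> M" by (auto simp: M0_def)
  obtain C where C0: "C \<ge> 0" and C: "\<forall>f\<in>Lk0 k rt par. cmod (\<phi> f) \<le> C * normk k rt par f"
    using phi_bound[OF rt bf] by blast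
  have "(\<lambda>n. \<phi> (F n)) \<longlonglongrightarrow> 0"
  proof (rule LIMSEQ_I)
    fix r :: real assume r: "r > 0"
    obtain N where N: "\<forall>g\<in>Lk0 k rt par. g rt = 0 \<longrightarrow> (\<forall>v. v \<noteq> rt \<and> depth rt par v \<le> N \<longrightarrow> Dif par g v = 0)
     \<longrightarrow> (\<forall>v. v \<noteq> rt \<longrightarrow> wDif k rt par g v \<le> 1) \<longrightarrow> cmod (\<phi> g) \<le> r / (2 * M0)"
      using tail_lemma[OF rt bf, of "r / (2 * M0)"] r M0 by auto
    define A where "A = {v. v \<noteq> rt \<and> depth rt par v \<le> N}"
    have finA: "finite A" unfolding A_def
      by (rule finite_subset[OF _ finite_depth[OF rt, of N]]) auto
    define s where "s n = cmod (F n rt) + (\<Sum>v\<in>A. wDif k rt par (F n) v)" for n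
    have "s \<longlonglongrightarrow> 0"
    proof -
      have "(\<lambda>n. wDif k rt par (F n) v) \<longlonglongrightarrow> 0" for v
      proof -
        have "(\<lambda>n. F n v - F n (par v)) \<longlonglongrightarrow> 0"
          using tendsto_diff[OF assms(3)[rule_format, of v] assms(3)[rule_format, of "par v"]] by simp
        hence "(\<lambda>n. cmod (F n v - F n (par v))) \<longlonglongrightarrow> 0" by (rule tendsto_norm_zero)
        hence "(\<lambda>n. weight k (depth rt par v) * cmod (F n v - F n (par v))) \<longlonglongrightarrow> 0"
          by (rule tendsto_mult_right_zero)
        then show ?thesis unfolding wDif_def Dif_def .
      qed
      hence "(\<lambda>n. \<Sum>v\<in>A. wDif k rt par (F n) v) \<longlonglongrightarrow> 0" by (intro tendsto_null_sum) auto
      moreover have "(\<lambda>n. cmod (F n rt)) \<longlonglongrightarrow> 0" using assms(3) by (intro tendsto_norm_zero) auto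
      ultimately show ?thesis unfolding s_def by (rule tendsto_add_zero[rotated])
    qed
    hence "(\<lambda>n. C * s n) \<longlonglongrightarrow> 0" by (rule tendsto_mult_right_zero)
    hence "eventually (\<lambda>n. C * s n < r / 2) sequentially" using r by (intro order_tendstoD(2)) auto
    then obtain no where no: "\<forall>n\<ge>no. C * s n < r / 2" unfolding eventually_sequentially by blast
    have "cmod (\<phi> (F n) - 0) < r" if n: "n \<ge> no" for n
    proof -
      define f where "f = F n"
      have fL: "f \<in> Lk0 k rt par" using assms(2) f_def by simp
      define p where "p = (\<lambda>x. f (anc rt par N x))"
      have pL: "p \<in> Lk0 k rt par" unfolding p_def by (rule Lk0_anc[OF rt fL])
      define t where "t = (\<lambda>x. f x + (-1) * p x)"
      have tL: "t \<in> Lk0 k rt par" unfolding t_def by (rule Lk0_comb[OF fL pL])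
      have "f = (\<lambda>x. p x + 1 * t x)" unfolding t_def by auto
      hence phif: "\<phi> f = \<phi> p + \<phi> t" using phi_comb[OF bf pL tL, of 1] by simp
      have "\<forall>v. v \<noteq> rt \<longrightarrow> wDif k rt par p v \<le> (\<Sum>v\<in>A. wDif k rt par f v)"
      proof (intro allI impI)
        fix v assume v: "v \<noteq> rt"
        have sn: "0 \<le> (\<Sum>v\<in>A. wDif k rt par f v)" by (intro sum_nonneg) (simp add: wDif_nonneg)
        show "wDif k rt par p v \<le> (\<Sum>v\<in>A. wDif k rt par f v)"
        proof (cases "depth rt par v \<le> N")
          case True
          hence "v \<in> A" using v by (simp add: A_def)
          hence "wDif k rt par f v \<le> (\<Sum>v\<in>A. wDif k rt par f v)"
            by (intro member_le_sum finA) (simp_all add: wDif_nonneg)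
          then show ?thesis using True wDif_anc[OF rt v] by (simp add: p_def)
        next
          case False
          then show ?thesis using sn wDif_anc[OF rt v] by (simp add: p_def)
        qed
      qed
      hence "normk k rt par p \<le> cmod (p rt) + (\<Sum>v\<in>A. wDif k rt par f v)" by (rule normk_le[OF rt])
      hence "normk k rt par p \<le> s n" by (simp add: s_def p_def anc_rt f_def)
      hence "C * normk k rt par p \<le> C * s n" using C0 by (simp add: mult_left_mono)
      moreover have "cmod (\<phi> p) \<le> C * normk k rt par p" using C pL by blast
      ultimately have php: "cmod (\<phi> p) < r / 2" using no n by fastforce
      have trt: "t rt = 0" by (simp add: t_def p_def anc_rt)
      have Dt0: "Dif par t v = 0" if "v \<noteq> rt" "depth rt par v \<le> N" for v
      proof -
        have "depth rt par (par v) \<le> N" using that depth_par[OF rt that(1)] by simp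
        hence "p (par v) = f (par v)" "p v = f v" using that by (simp_all add: p_def anc_low)
        then show ?thesis by (simp add: t_def Dif_def)
      qed
      have tb: "wDif k rt par t v \<le> M0" if v: "v \<noteq> rt" for v
      proof (cases "depth rt par v \<le> N")
        case True
        then show ?thesis using Dt0[OF v True] M0 by (simp add: wDif_def)
      next
        case False
        have "Dif par p v = 0" using False Dif_anc[OF rt v] by (simp add: p_def)
        hence "wDif k rt par t v = wDif k rt par f v" unfolding t_def by (rule wDif_comb1)
        also have "\<dots> \<le> normk k rt par f - cmod (f rt)" by (rule wDif_le_normk[OF Lk0_Lk[OF fL] v])
        also have "\<dots> \<le> M0" using M[rule_format, of n] M0 norm_ge_zero[of "f rt"] unfolding f_def by linarith
        finally show ?thesis .
      qed
      define t' where "t' = (\<lambda>x. complex_of_real (1 / M0) * t x)"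
      have t'L: "t' \<in> Lk0 k rt par" unfolding t'_def using Lk0_comb[OF zero_Lk0 tL, of "complex_of_real (1 / M0)"] by simp
      have "cmod (\<phi> t') \<le> r / (2 * M0)"
      proof -
        have "t' rt = 0" using trt by (simp add: t'_def)
        moreover have "\<forall>v. v \<noteq> rt \<and> depth rt par v \<le> N \<longrightarrow> Dif par t' v = 0"
          unfolding t'_def Dif_scal using Dt0 by simp
        moreover have "\<forall>v. v \<noteq> rt \<longrightarrow> wDif k rt par t' v \<le> 1"
        proof (intro allI impI)
          fix v assume v: "v \<noteq> rt"
          have "wDif k rt par t' v = wDif k rt par t v / M0"
            unfolding t'_def wDif_scal using M0 by (simp add: norm_divide)
          also have "\<dots> \<le> 1" using tb[OF v] M0 by simp
          finally show "wDif k rt par t' v \<le> 1" .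
        qed
        ultimately show ?thesis using N t'L by blast
      qed
      moreover have "t = (\<lambda>x. complex_of_real M0 * t' x)" unfolding t'_def using M0 by auto
      ultimately have "cmod (\<phi> t) = M0 * cmod (\<phi> t')" "cmod (\<phi> t') \<le> r / (2 * M0)"
        using phi_scal[OF bf t'L, of "complex_of_real M0"] M0 by (simp_all add: norm_mult)
      hence "cmod (\<phi> t) \<le> M0 * (r / (2 * M0))" using M0 mult_left_mono[of "cmod (\<phi> t')" "r / (2 * M0)" M0] by linarith
      also have "\<dots> = r / 2" using M0 by simp
      finally have "cmod (\<phi> t) \<le> r / 2" .
      with php phif have "cmod (\<phi> f) < r" using norm_triangle_ineq[of "\<phi> p" "\<phi> t"] by simp
      then show ?thesis by (simp add: f_def)
    qed
    then show "\<exists>no. \<forall>n\<ge>no. cmod (\<phi> (F n) - 0) < r" by blast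
  qed
  then show "(\<lambda>n. \<phi> (F n)) \<longlonglongrightarrow> \<phi> (\<lambda>v. 0)" using phi_zero[OF bf] by simp
qed


end
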